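(* Let $(X,\mathrm{dist})$ be a metric space, $\Sigma$ a metric space, and $\{U_\sigma(t,\tau)\}_{\sigma\in\Sigma}$ a family of processes on $X$. If the family is uniformly asymptotically compact, then it possesses the uniform global attractor $A_\Sigma$, and $A_\Sigma=A^\star_\Sigma$.
   Context: A process on $X$ is a family of maps $U(t,\tau):X\to X$, indexed by reals $t\ge\tau$, with $U(\tau,\tau)=\mathrm{id}_X$ and $U(t,\tau)=U(t,s)U(s,\tau)$ for $t\ge s\ge\tau$; no continuity is assumed. For nonempty $B,C\subset X$, $\delta_X(B,C)=\sup_{x\in B}\inf_{\xi\in C}\mathrm{dist}(x,\xi)$. A set $K\subset X$ is uniformly attracting if for every bounded $C\subset X$, $\lim_{t-\tau\to\infty}\sup_{\sigma\in\Sigma}\delta_X(U_\sigma(t,\tau)C,K)=0$. The family is uniformly asymptotically compact if there exists a compact uniformly attracting set. A compact set $A_\Sigma\subset X$ is the uniform global attractor of the family if it is uniformly attracting and is contained in every compact uniformly attracting set. $\mathfrak{C}_\Sigma$ is the collection of all sequences $y_n=U_{\sigma_n}(t_n,\tau_n)x_n$ with $x_n$ a bounded sequence in $X$, $\sigma_n\in\Sigma$, $t_n-\tau_n\to\infty$, and $A^\star_\Sigma=\{x\in X: y_n\to x$ along a subsequence, for some $y_n\in\mathfrak{C}_\Sigma\}$. *)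

theory Defs
  imports "HOL-Analysis.Analysis"
begin

text \<open>A process on X: U(t,tau) for t >= tau, with U(tau,tau) = id and the cocycle law.
  No continuity is assumed. Values for t < tau are irrelevant.\<close>
definition is_process :: "(real \<Rightarrow> real \<Rightarrow> 'a \<Rightarrow> 'a) \<Rightarrow> bool" where
  "is_process U \<longleftrightarrow>
     (\<forall>\<tau>. U \<tau> \<tau> = id) \<and>
     (\<forall>t s \<tau>. \<tau> \<le> s \<and> s \<le> t \<longrightarrow> U t \<tau> = U t s \<circ> U s \<tau>)"

definition hsemidist :: "'a::metric_space set \<Rightarrow> 'a set \<Rightarrow> ereal" where
  "hsemidist B C = (SUP x\<in>B. INF \<xi>\<in>C. ereal (dist x \<xi>))"

definition uniformly_attracting ::
  "('s \<Rightarrow> real \<Rightarrow> real \<Rightarrow> 'a::metric_space \<Rightarrow> 'a) \<Rightarrow> 'a set \<Rightarrow> bool" where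
  "uniformly_attracting U K \<longleftrightarrow>
     (\<forall>C. bounded C \<longrightarrow>
        (\<forall>e>0. \<exists>T. \<forall>t \<tau>. t - \<tau> \<ge> T \<longrightarrow>
            (SUP \<sigma>. hsemidist (U \<sigma> t \<tau> ` C) K) \<le> ereal e))"

definition uniformly_asymptotically_compact ::
  "('s \<Rightarrow> real \<Rightarrow> real \<Rightarrow> 'a::metric_space \<Rightarrow> 'a) \<Rightarrow> bool" where
  "uniformly_asymptotically_compact U \<longleftrightarrow>
     (\<exists>K. compact K \<and> uniformly_attracting U K)"

definition is_uniform_global_attractor ::
  "('s \<Rightarrow> real \<Rightarrow> real \<Rightarrow> 'a::metric_space \<Rightarrow> 'a) \<Rightarrow> 'a set \<Rightarrow> bool" where
  "is_uniform_global_attractor U A \<longleftrightarrow>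
     compact A \<and> uniformly_attracting U A \<and>
     (\<forall>K. compact K \<and> uniformly_attracting U K \<longrightarrow> A \<subseteq> K)"

definition Astar ::
  "('s \<Rightarrow> real \<Rightarrow> real \<Rightarrow> 'a::metric_space \<Rightarrow> 'a) \<Rightarrow> 'a set" where
  "Astar U = {x. \<exists>(xs :: nat \<Rightarrow> 'a) (\<sigma>s :: nat \<Rightarrow> 's) (ts :: nat \<Rightarrow> real) (\<tau>s :: nat \<Rightarrow> real)
                 (r :: nat \<Rightarrow> nat).
        bounded (range xs) \<and>
        filterlim (\<lambda>n. ts n - \<tau>s n) at_top sequentially \<and>
        strict_mono r \<and>
        (\<lambda>n. U (\<sigma>s (r n)) (ts (r n)) (\<tau>s (r n)) (xs (r n))) \<longlonglongrightarrow> x}"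

end

theory Submission
  imports Defs
begin

lemma att:
  fixes U :: "'s \<Rightarrow> real \<Rightarrow> real \<Rightarrow> 'a::metric_space \<Rightarrow> 'a"
  assumes "uniformly_attracting U K" "bounded C" "e > 0"
  obtains T where "\<And>\<sigma> t \<tau> x. t - \<tau> \<ge> T \<Longrightarrow> x \<in> C \<Longrightarrow> \<exists>k\<in>K. dist (U \<sigma> t \<tau> x) k < e"
proof -
  from assms obtain T where T: "\<And>t \<tau>. t - \<tau> \<ge> T \<Longrightarrow>
      (SUP \<sigma>. hsemidist (U \<sigma> t \<tau> ` C) K) \<le> ereal (e/2)"
    unfolding uniformly_attracting_def by (meson half_gt_zero)
  have "\<exists>k\<in>K. dist (U \<sigma> t \<tau> x) k < e" if "t - \<tau> \<ge> T" "x \<in> C" for \<sigma> t \<tau> x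
  proof -
    have "(INF \<xi>\<in>K. ereal (dist (U \<sigma> t \<tau> x) \<xi>)) \<le> hsemidist (U \<sigma> t \<tau> ` C) K"
      unfolding hsemidist_def using that(2) by (auto intro!: SUP_upper)
    also have "\<dots> \<le> (SUP \<sigma>. hsemidist (U \<sigma> t \<tau> ` C) K)" by (rule SUP_upper) auto
    also have "\<dots> \<le> ereal (e/2)" using T that(1) by blast
    also have "\<dots> < ereal e" using assms(3) by simp
    finally show ?thesis by (auto simp: INF_less_iff)
  qed
  then show ?thesis using that by blast
qed

lemma att_nonempty:
  fixes U :: "'s \<Rightarrow> real \<Rightarrow> real \<Rightarrow> 'a::metric_space \<Rightarrow> 'a"
  assumes "uniformly_attracting U K"
  shows "K \<noteq> {}"
proof -
  obtain x :: 'a where "x \<in> {x}" by simp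
  obtain T where "\<And>\<sigma> t \<tau> y. t - \<tau> \<ge> T \<Longrightarrow> y \<in> {x} \<Longrightarrow> \<exists>k\<in>K. dist (U \<sigma> t \<tau> y) k < 1"
    using att[OF assms, of "{x}" 1] by auto
  then have "\<exists>k\<in>K. dist (U undefined T 0 x) k < 1" by auto
  then show ?thesis by auto
qed

lemma att_seq:
  fixes U :: "'s \<Rightarrow> real \<Rightarrow> real \<Rightarrow> 'a::metric_space \<Rightarrow> 'a"
  assumes "uniformly_attracting U K" "bounded (range xs)"
    "filterlim (\<lambda>n. ts n - \<tau>s n) at_top sequentially"
  shows "(\<lambda>n. infdist (U (\<sigma>s n) (ts n) (\<tau>s n) (xs n)) K) \<longlonglongrightarrow> 0"
proof (rule LIMSEQ_I)
  fix r :: real assume r: "r > 0"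
  obtain T where T: "\<And>\<sigma> t \<tau> x. t - \<tau> \<ge> T \<Longrightarrow> x \<in> range xs \<Longrightarrow> \<exists>k\<in>K. dist (U \<sigma> t \<tau> x) k < r"
    using att[OF assms(1,2) r] by blast
  from assms(3) have "eventually (\<lambda>n. T \<le> ts n - \<tau>s n) sequentially"
    by (simp add: filterlim_at_top)
  then obtain N where N: "\<And>n. n \<ge> N \<Longrightarrow> T \<le> ts n - \<tau>s n" by (auto simp: eventually_sequentially)
  have "norm (infdist (U (\<sigma>s n) (ts n) (\<tau>s n) (xs n)) K - 0) < r" if nN: "n \<ge> N" for n
  proof -
    obtain k where "k \<in> K" "dist (U (\<sigma>s n) (ts n) (\<tau>s n) (xs n)) k < r"
      using T N nN by (meson rangeI)
    then have "infdist (U (\<sigma>s n) (ts n) (\<tau>s n) (xs n)) K < r"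
      using infdist_le[of k K "U (\<sigma>s n) (ts n) (\<tau>s n) (xs n)"] by linarith
    then show ?thesis using infdist_nonneg[of "U (\<sigma>s n) (ts n) (\<tau>s n) (xs n)" K] by simp
  qed
  then show "\<exists>no. \<forall>n\<ge>no. norm (infdist (U (\<sigma>s n) (ts n) (\<tau>s n) (xs n)) K - 0) < r" by blast
qed

lemma infdist_lt:
  assumes "A \<noteq> {}" "infdist x A < d"
  shows "\<exists>a\<in>A. dist x a < d"
proof -
  have "bdd_below ((\<lambda>a. dist x a) ` A)" by (rule bdd_belowI2[of _ 0]) simp
  then show ?thesis using assms by (simp add: infdist_notempty cINF_less_iff)
qed

lemma seq_cpt:
  fixes y :: "nat \<Rightarrow> 'a::metric_space"
  assumes "compact K" "K \<noteq> {}" "(\<lambda>n. infdist (y n) K) \<longlonglongrightarrow> 0"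
  obtains r l where "l \<in> K" "strict_mono r" "(y \<circ> r) \<longlonglongrightarrow> l"
proof -
  have "\<exists>k\<in>K. dist (y n) k < infdist (y n) K + 1 / (real n + 1)" for n
    by (rule infdist_lt[OF assms(2)]) simp
  then obtain k where k: "\<And>n. k n \<in> K" "\<And>n. dist (y n) (k n) < infdist (y n) K + 1 / (real n + 1)"
    by metis
  obtain l r where lr: "l \<in> K" "strict_mono r" "(k \<circ> r) \<longlonglongrightarrow> l"
    using seq_compactE[OF compact_imp_seq_compact[OF assms(1)], of k] k(1) by blast
  have e0: "(\<lambda>n. infdist (y n) K + 1 / (real n + 1)) \<longlonglongrightarrow> 0"
  proof -
    have "(\<lambda>n. 1 / (real n + 1)) \<longlonglongrightarrow> 0"
      using LIMSEQ_inverse_real_of_nat by (simp add: inverse_eq_divide add.commute)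
    from tendsto_add[OF assms(3) this] show ?thesis by simp
  qed
  have "(\<lambda>n. dist (y n) (k n)) \<longlonglongrightarrow> 0"
  proof (rule Lim_null_comparison[OF _ e0])
    show "\<forall>\<^sub>F n in sequentially. norm (dist (y n) (k n)) \<le> infdist (y n) K + 1 / (real n + 1)"
      using k(2) by (simp add: less_imp_le)
  qed
  then have d1: "(\<lambda>n. dist (y (r n)) (k (r n))) \<longlonglongrightarrow> 0"
    using LIMSEQ_subseq_LIMSEQ[OF _ lr(2)] by (simp add: o_def)
  have d2: "(\<lambda>n. dist (k (r n)) l) \<longlonglongrightarrow> 0" using lr(3) tendsto_dist_iff[of "k \<circ> r" l sequentially] by (simp add: o_def)
  have "(\<lambda>n. dist (y (r n)) l) \<longlonglongrightarrow> 0"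
  proof (rule Lim_null_comparison)
    show "\<forall>\<^sub>F n in sequentially. norm (dist (y (r n)) l) \<le> dist (y (r n)) (k (r n)) + dist (k (r n)) l"
      by (simp add: dist_triangle)
    show "(\<lambda>n. dist (y (r n)) (k (r n)) + dist (k (r n)) l) \<longlonglongrightarrow> 0"
      using tendsto_add[OF d1 d2] by simp
  qed
  then have "(y \<circ> r) \<longlonglongrightarrow> l" using tendsto_dist_iff[of "y \<circ> r" l sequentially] by (simp add: o_def)
  then show ?thesis using that lr by blast
qed

lemma astar_sub:
  fixes U :: "'s \<Rightarrow> real \<Rightarrow> real \<Rightarrow> 'a::metric_space \<Rightarrow> 'a"
  assumes "compact K" "uniformly_attracting U K"
  shows "Astar U \<subseteq> K"
proof
  fix x assume "x \<in> Astar U"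
  then obtain xs \<sigma>s ts \<tau>s r where d: "bounded (range xs)"
    "filterlim (\<lambda>n. ts n - \<tau>s n) at_top sequentially" "strict_mono r"
    "(\<lambda>n. U (\<sigma>s (r n)) (ts (r n)) (\<tau>s (r n)) (xs (r n))) \<longlonglongrightarrow> x"
    unfolding Astar_def by blast
  have ne: "K \<noteq> {}" using att_nonempty[OF assms(2)] .
  have h: "(\<lambda>n. infdist (U (\<sigma>s n) (ts n) (\<tau>s n) (xs n)) K) \<longlonglongrightarrow> 0"
    using att_seq[OF assms(2) d(1,2)] .
  have h1: "(\<lambda>n. infdist (U (\<sigma>s (r n)) (ts (r n)) (\<tau>s (r n)) (xs (r n))) K) \<longlonglongrightarrow> 0"
    using LIMSEQ_subseq_LIMSEQ[OF h d(3)] by (simp add: o_def)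
  have h2: "(\<lambda>n. infdist (U (\<sigma>s (r n)) (ts (r n)) (\<tau>s (r n)) (xs (r n))) K) \<longlonglongrightarrow> infdist x K"
    using tendsto_infdist[OF d(4)] .
  have "infdist x K = 0" using LIMSEQ_unique[OF h2 h1] .
  then show "x \<in> K" using in_closed_iff_infdist_zero[OF compact_imp_closed[OF assms(1)] ne] by simp
qed

lemma astar_att:
  fixes U :: "'s \<Rightarrow> real \<Rightarrow> real \<Rightarrow> 'a::metric_space \<Rightarrow> 'a"
  assumes "compact K0" "uniformly_attracting U K0"
  shows "uniformly_attracting U (Astar U)"
  unfolding uniformly_attracting_def
proof (intro allI impI)
  fix C :: "'a set" and e :: real
  assume C: "bounded C" and e: "e > 0"
  show "\<exists>T. \<forall>t \<tau>. T \<le> t - \<tau> \<longrightarrow> (SUP \<sigma>. hsemidist (U \<sigma> t \<tau> ` C) (Astar U)) \<le> ereal e"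
  proof (rule ccontr)
    assume "\<not> ?thesis"
    then have "\<forall>T. \<exists>t \<tau>. T \<le> t - \<tau> \<and> \<not> (SUP \<sigma>. hsemidist (U \<sigma> t \<tau> ` C) (Astar U)) \<le> ereal e"
      by blast
    have "\<exists>t \<tau> \<sigma> x. real n \<le> t - \<tau> \<and> x \<in> C \<and> (\<forall>\<xi>\<in>Astar U. e < dist (U \<sigma> t \<tau> x) \<xi>)" for n
    proof -
      obtain t \<tau> where t: "real n \<le> t - \<tau>" "\<not> (SUP \<sigma>. hsemidist (U \<sigma> t \<tau> ` C) (Astar U)) \<le> ereal e"
        using \<open>\<forall>T. _\<close> by blast
      then obtain \<sigma> where "ereal e < hsemidist (U \<sigma> t \<tau> ` C) (Astar U)"
        by (auto simp: not_le less_SUP_iff)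
      then obtain x where x: "x \<in> C" "ereal e < (INF \<xi>\<in>Astar U. ereal (dist (U \<sigma> t \<tau> x) \<xi>))"
        unfolding hsemidist_def by (auto simp: less_SUP_iff)
      have "\<forall>\<xi>\<in>Astar U. e < dist (U \<sigma> t \<tau> x) \<xi>"
        using less_INF_D[OF x(2)] by auto
      then show ?thesis using t(1) x(1) by blast
    qed
    then obtain ts \<tau>s \<sigma>s xs where sq: "\<And>n. real n \<le> ts n - \<tau>s n" "\<And>n. xs n \<in> C"
      "\<And>n. \<forall>\<xi>\<in>Astar U. e < dist (U (\<sigma>s n) (ts n) (\<tau>s n) (xs n)) \<xi>"
      by metis
    have bd: "bounded (range xs)" using C sq(2) by (meson bounded_subset image_subset_iff)
    have fl: "filterlim (\<lambda>n. ts n - \<tau>s n) at_top sequentially"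
      by (rule filterlim_at_top_mono[OF filterlim_real_sequentially]) (use sq(1) in auto)
    obtain r l where rl: "l \<in> K0" "strict_mono r"
      "((\<lambda>n. U (\<sigma>s n) (ts n) (\<tau>s n) (xs n)) \<circ> r) \<longlonglongrightarrow> l"
      using seq_cpt[OF assms(1) att_nonempty[OF assms(2)] att_seq[OF assms(2) bd fl]] by blast
    have "(\<lambda>n. U (\<sigma>s (r n)) (ts (r n)) (\<tau>s (r n)) (xs (r n))) \<longlonglongrightarrow> l"
      using rl(3) by (simp add: o_def)
    then have "l \<in> Astar U"
      unfolding Astar_def using bd fl rl(2) by blast
    moreover have "eventually (\<lambda>n. dist (((\<lambda>n. U (\<sigma>s n) (ts n) (\<tau>s n) (xs n)) \<circ> r) n) l < e) sequentially"
      using tendstoD[OF rl(3) e] .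
    then obtain N where "dist (((\<lambda>n. U (\<sigma>s n) (ts n) (\<tau>s n) (xs n)) \<circ> r) N) l < e"
      by (auto simp: eventually_sequentially)
    ultimately show False using sq(3)[of "r N"] by fastforce
  qed
qed

lemma astar_closed:
  fixes U :: "'s \<Rightarrow> real \<Rightarrow> real \<Rightarrow> 'a::metric_space \<Rightarrow> 'a"
  assumes proc: "\<forall>\<sigma>. is_process (U \<sigma>)" and "compact K0" "uniformly_attracting U K0"
  shows "closed (Astar U)"
  unfolding closed_sequential_limits
proof (intro allI impI, elim conjE)
  fix a :: "nat \<Rightarrow> 'a" and l assume a: "\<forall>n. a n \<in> Astar U" and al: "a \<longlonglongrightarrow> l"
  define B0 where "B0 = {w. \<exists>k\<in>K0. dist w k < 1}"
  have bB0: "bounded B0"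
  proof -
    obtain c :: 'a where True by simp
    obtain \<epsilon> where \<epsilon>: "\<forall>y\<in>K0. dist c y \<le> \<epsilon>"
      using compact_imp_bounded[OF assms(2)] bounded_any_center[of K0 c] by blast
    have "\<forall>w\<in>B0. dist c w \<le> \<epsilon> + 1"
    proof
      fix w assume "w \<in> B0"
      then obtain k where "k \<in> K0" "dist w k < 1" unfolding B0_def by blast
      then show "dist c w \<le> \<epsilon> + 1" using \<epsilon> dist_triangle[of c w k] dist_commute[of w k] by fastforce
    qed
    then show ?thesis using bounded_any_center[of B0 c] by blast
  qed
  have "\<exists>w \<sigma> t s. w \<in> B0 \<and> real k \<le> t - s \<and> dist (U \<sigma> t s w) (a k) < 1 / (real k + 1)" for k
  proof -
    from a have "a k \<in> Astar U" by blast
    then obtain xs \<sigma>s ts \<tau>s r where d: "bounded (range xs)"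
      "filterlim (\<lambda>n. ts n - \<tau>s n) at_top sequentially" "strict_mono r"
      "(\<lambda>n. U (\<sigma>s (r n)) (ts (r n)) (\<tau>s (r n)) (xs (r n))) \<longlonglongrightarrow> a k"
      unfolding Astar_def by blast
    obtain T where T: "\<And>\<sigma> t \<tau> x. t - \<tau> \<ge> T \<Longrightarrow> x \<in> range xs \<Longrightarrow> \<exists>k\<in>K0. dist (U \<sigma> t \<tau> x) k < 1"
      using att[OF assms(3) d(1), of 1] by auto
    have e1: "eventually (\<lambda>n. dist (U (\<sigma>s (r n)) (ts (r n)) (\<tau>s (r n)) (xs (r n))) (a k) < 1 / (real k + 1)) sequentially"
      using tendstoD[OF d(4), of "1 / (real k + 1)"] by simp
    have "filterlim (\<lambda>n. ts (r n) - \<tau>s (r n)) at_top sequentially"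
      using filterlim_compose[OF d(2) filterlim_subseq[OF d(3)]] by (simp add: o_def)
    then have e2: "eventually (\<lambda>n. max T 0 + real k \<le> ts (r n) - \<tau>s (r n)) sequentially"
      by (simp add: filterlim_at_top)
    obtain n where n: "dist (U (\<sigma>s (r n)) (ts (r n)) (\<tau>s (r n)) (xs (r n))) (a k) < 1 / (real k + 1)"
      "max T 0 + real k \<le> ts (r n) - \<tau>s (r n)"
      using eventually_happens'[OF sequentially_bot eventually_conj[OF e1 e2]] by blast
    define \<sigma> where "\<sigma> = \<sigma>s (r n)"
    define t where "t = ts (r n)"
    define \<tau> where "\<tau> = \<tau>s (r n)"
    define x where "x = xs (r n)"
    define s where "s = \<tau> + max T 0"
    have "U \<sigma> t \<tau> = U \<sigma> t s \<circ> U \<sigma> s \<tau>"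
      using proc n(2) unfolding is_process_def s_def t_def \<tau>_def by auto
    then have eq: "U \<sigma> t \<tau> x = U \<sigma> t s (U \<sigma> s \<tau> x)" by simp
    have "U \<sigma> s \<tau> x \<in> B0" unfolding B0_def using T[of s \<tau> x \<sigma>] by (simp add: s_def x_def)
    moreover have "real k \<le> t - s" using n(2) by (simp add: s_def t_def \<tau>_def)
    moreover have "dist (U \<sigma> t s (U \<sigma> s \<tau> x)) (a k) < 1 / (real k + 1)"
      using n(1) eq by (simp add: \<sigma>_def t_def \<tau>_def x_def)
    ultimately show ?thesis by blast
  qed
  then obtain W \<Sigma> Tt S where W: "\<And>k. W k \<in> B0" "\<And>k. real k \<le> Tt k - S k"
    "\<And>k. dist (U (\<Sigma> k) (Tt k) (S k) (W k)) (a k) < 1 / (real k + 1)"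
    by metis
  have bd: "bounded (range W)" using bB0 W(1) by (meson bounded_subset image_subset_iff)
  have fl: "filterlim (\<lambda>n. Tt n - S n) at_top sequentially"
    by (rule filterlim_at_top_mono[OF filterlim_real_sequentially]) (use W(2) in auto)
  have i0: "(\<lambda>n. 1 / (real n + 1)) \<longlonglongrightarrow> 0"
    using LIMSEQ_inverse_real_of_nat by (simp add: inverse_eq_divide add.commute)
  have d2: "(\<lambda>n. dist (a n) l) \<longlonglongrightarrow> 0" using al tendsto_dist_iff[of a l sequentially] by simp
  have "(\<lambda>n. dist (U (\<Sigma> n) (Tt n) (S n) (W n)) l) \<longlonglongrightarrow> 0"
  proof (rule Lim_null_comparison)
    show "\<forall>\<^sub>F n in sequentially. norm (dist (U (\<Sigma> n) (Tt n) (S n) (W n)) l) \<le> 1 / (real n + 1) + dist (a n) l"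
      using W(3) dist_triangle[of "U (\<Sigma> _) (Tt _) (S _) (W _)" l "a _"]
      by (auto intro!: always_eventually) (smt (verit) W(3) dist_triangle)
    show "(\<lambda>n. 1 / (real n + 1) + dist (a n) l) \<longlonglongrightarrow> 0"
      using tendsto_add[OF i0 d2] by simp
  qed
  then have conv: "(\<lambda>n. U (\<Sigma> (id n)) (Tt (id n)) (S (id n)) (W (id n))) \<longlonglongrightarrow> l"
    using tendsto_dist_iff[of "\<lambda>n. U (\<Sigma> n) (Tt n) (S n) (W n)" l sequentially] by simp
  show "l \<in> Astar U"
    unfolding Astar_def using bd fl conv strict_mono_id by blast
qed

theorem theorem3p5:
  fixes U :: "'s::metric_space \<Rightarrow> real \<Rightarrow> real \<Rightarrow> 'a::metric_space \<Rightarrow> 'a"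
  assumes "\<forall>\<sigma>. is_process (U \<sigma>)"
    and "uniformly_asymptotically_compact U"
  shows "\<exists>A. is_uniform_global_attractor U A \<and> A = Astar U"
proof -
  obtain K0 where K0: "compact K0" "uniformly_attracting U K0"
    using assms(2) unfolding uniformly_asymptotically_compact_def by blast
  have sub: "Astar U \<subseteq> K0" using astar_sub[OF K0] .
  have cl: "closed (Astar U)" using astar_closed[OF assms(1) K0] .
  have "compact (Astar U)"
    using compact_Int_closed[OF K0(1) cl] sub by (simp add: Int_absorb1)
  moreover have "uniformly_attracting U (Astar U)" using astar_att[OF K0] .
  ultimately have "is_uniform_global_attractor U (Astar U)"
    unfolding is_uniform_global_attractor_def using astar_sub by blast
  then show ?thesis by blast
qed

end
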